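(* (1) If $\beta\in\mathcal Q(\Phi_+)$ is not a simple root, then there exists $i\in I$ such that $r_i(\beta)\in\mathcal Q(\Phi_+)$ and $\mathrm{ht}(r_i(\beta^\vee))=\mathrm{ht}(\beta^\vee)-1$. (2) Let $\beta\in\mathcal Q(\Phi_+)$ and $i\in I$. Then $r_i(\beta)\in\mathcal Q(\Phi_+)$ if and only if $|\langle\beta^\vee,\alpha_i\rangle|\le1$.
   Context: Kac–Moody root datum $(A,X,Y,(\alpha_i)_{i\in I},(\alpha_i^\vee)_{i\in I})$ with generalized Cartan matrix $A=(a_{i,j})$, $\langle\alpha_i^\vee,\alpha_j\rangle=a_{i,j}$, simple reflections $r_i(x)=x-\langle\alpha_i^\vee,x\rangle\alpha_i$ on $X$ and $r_i(y)=y-\langle y,\alpha_i\rangle\alpha_i^\vee$ on $Y$, Weyl group $W^v=\langle r_i\rangle$. $\Phi=W^v\{\alpha_i\}$, $\Phi_+=\Phi\cap\bigoplus\mathbb Z_{\ge0}\alpha_i$, $\Phi_-=-\Phi_+$; coroot $\beta^\vee=w(\alpha_i^\vee)$ and reflection $s_\beta=wr_iw^{-1}$ for $\beta=w(\alpha_i)$; $\mathrm{ht}(\sum N_i\alpha_i^\vee)=\sum N_i$. $\mathrm{Inv}(w)=\{\alpha\in\Phi_+\mid w\alpha\in\Phi_-\}$. $\beta\in\Phi_+$ is quantum if $\langle\beta^\vee,\gamma\rangle=1$ for all $\gamma\in\mathrm{Inv}(s_\beta)\setminus\{\beta\}$; $\mathcal Q(\Phi_+)$ is the set of quantum roots. 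*)

theory Defs
  imports Main
begin

text \<open>Kac-Moody root data, realised on the root lattice Q = (I -> int) (coordinates
  w.r.t. the simple roots) and the coroot lattice Q^vee = (I -> int) (coordinates
  w.r.t. the simple coroots).\<close>

definition gcm :: "('i::finite \<Rightarrow> 'i \<Rightarrow> int) \<Rightarrow> bool" where
  "gcm A \<longleftrightarrow> (\<forall>i. A i i = 2) \<and> (\<forall>i j. i \<noteq> j \<longrightarrow> A i j \<le> 0)
            \<and> (\<forall>i j. A i j = 0 \<longleftrightarrow> A j i = 0)"

text \<open>simple root alpha_i (resp. simple coroot alpha_i^vee) as a coordinate vector\<close>
definition simple :: "'i \<Rightarrow> ('i \<Rightarrow> int)" where
  "simple i = (\<lambda>j. if j = i then 1 else 0)"

text \<open>pairing <y, x> with y in the coroot lattice and x in the root lattice,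
  bilinear with <alpha_i^vee, alpha_j> = A i j\<close>
definition pair :: "('i::finite \<Rightarrow> 'i \<Rightarrow> int) \<Rightarrow> ('i \<Rightarrow> int) \<Rightarrow> ('i \<Rightarrow> int) \<Rightarrow> int" where
  "pair A y x = (\<Sum>i\<in>UNIV. \<Sum>j\<in>UNIV. y i * x j * A i j)"

definition refl :: "('i::finite \<Rightarrow> 'i \<Rightarrow> int) \<Rightarrow> 'i \<Rightarrow> ('i \<Rightarrow> int) \<Rightarrow> ('i \<Rightarrow> int)" where
  "refl A i x = x - (\<lambda>j. pair A (simple i) x * simple i j)"

definition crefl :: "('i::finite \<Rightarrow> 'i \<Rightarrow> int) \<Rightarrow> 'i \<Rightarrow> ('i \<Rightarrow> int) \<Rightarrow> ('i \<Rightarrow> int)" where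
  "crefl A i y = y - (\<lambda>j. pair A y (simple i) * simple j i)"

text \<open>An element of W^v given by a word [i1,...,ik] means r_i1 ... r_ik.\<close>
definition wact :: "('i::finite \<Rightarrow> 'i \<Rightarrow> int) \<Rightarrow> 'i list \<Rightarrow> ('i \<Rightarrow> int) \<Rightarrow> ('i \<Rightarrow> int)" where
  "wact A ws = foldr (\<lambda>i f. refl A i \<circ> f) ws id"

definition cwact :: "('i::finite \<Rightarrow> 'i \<Rightarrow> int) \<Rightarrow> 'i list \<Rightarrow> ('i \<Rightarrow> int) \<Rightarrow> ('i \<Rightarrow> int)" where
  "cwact A ws = foldr (\<lambda>i f. crefl A i \<circ> f) ws id"

definition roots :: "('i::finite \<Rightarrow> 'i \<Rightarrow> int) \<Rightarrow> ('i \<Rightarrow> int) set" where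
  "roots A = {wact A ws (simple i) | ws i. True}"

definition pos_roots :: "('i::finite \<Rightarrow> 'i \<Rightarrow> int) \<Rightarrow> ('i \<Rightarrow> int) set" where
  "pos_roots A = {x \<in> roots A. \<forall>j. 0 \<le> x j}"

definition neg_roots :: "('i::finite \<Rightarrow> 'i \<Rightarrow> int) \<Rightarrow> ('i \<Rightarrow> int) set" where
  "neg_roots A = uminus ` pos_roots A"

definition coroot :: "('i::finite \<Rightarrow> 'i \<Rightarrow> int) \<Rightarrow> ('i \<Rightarrow> int) \<Rightarrow> ('i \<Rightarrow> int)" where
  "coroot A \<beta> = (THE c. \<exists>ws i. \<beta> = wact A ws (simple i) \<and> c = cwact A ws (simple i))"

text \<open>s_beta = w r_i w^{-1} (acting on the root lattice) for beta = w(alpha_i);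
  w^{-1} is given by the reversed word since r_i is an involution\<close>
definition srefl :: "('i::finite \<Rightarrow> 'i \<Rightarrow> int) \<Rightarrow> ('i \<Rightarrow> int) \<Rightarrow> ('i \<Rightarrow> int) \<Rightarrow> ('i \<Rightarrow> int)" where
  "srefl A \<beta> = (THE f. \<exists>ws i. \<beta> = wact A ws (simple i)
                      \<and> f = wact A ws \<circ> refl A i \<circ> wact A (rev ws))"

definition Inv :: "('i::finite \<Rightarrow> 'i \<Rightarrow> int) \<Rightarrow> (('i \<Rightarrow> int) \<Rightarrow> ('i \<Rightarrow> int)) \<Rightarrow> ('i \<Rightarrow> int) set" where
  "Inv A w = {\<alpha> \<in> pos_roots A. w \<alpha> \<in> neg_roots A}"

definition quantum_roots :: "('i::finite \<Rightarrow> 'i \<Rightarrow> int) \<Rightarrow> ('i \<Rightarrow> int) set" where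
  "quantum_roots A = {\<beta> \<in> pos_roots A.
       \<forall>\<gamma> \<in> Inv A (srefl A \<beta>) - {\<beta>}. pair A (coroot A \<beta>) \<gamma> = 1}"

definition ht :: "('i::finite \<Rightarrow> int) \<Rightarrow> int" where
  "ht y = (\<Sum>i\<in>UNIV. y i)"

end

theory Submission
  imports Defs
begin

definition tr :: "('i \<Rightarrow> 'i \<Rightarrow> int) \<Rightarrow> ('i \<Rightarrow> 'i \<Rightarrow> int)" where
  "tr B = (\<lambda>i j. B j i)"
lemma tr_tr[simp]: "tr (tr B) = B" by (simp add: tr_def)
lemma pair_alt: "pair B y x = (\<Sum>a\<in>UNIV. y a * (\<Sum>b\<in>UNIV. x b * B a b))"
  unfolding pair_def by (simp add: sum_distrib_left mult_ac)
lemma pair_alt2: "pair B y x = (\<Sum>b\<in>UNIV. x b * (\<Sum>a\<in>UNIV. y a * B a b))"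
  unfolding pair_def by (subst sum.swap) (simp add: sum_distrib_left mult_ac)
lemma simple_mult: "simple i a * t = (if a = i then t else 0)"
  by (simp add: simple_def)
lemma simple_mult': "t * simple i a = (if a = i then t else 0)"
  by (simp add: simple_def)
lemma pair_simple_left: "pair B (simple i) x = (\<Sum>j\<in>UNIV. x j * B i j)"
  by (simp add: pair_alt simple_mult)
lemma pair_simple_right: "pair B y (simple i) = (\<Sum>a\<in>UNIV. y a * B a i)"
  by (simp add: pair_alt2 simple_mult)
lemma pair_tr: "pair (tr B) x y = pair B y x"
  unfolding pair_def tr_def by (subst sum.swap) (simp add: mult_ac)
lemma pair_lin_left: "pair B (\<lambda>a. p * y a + q * z a) x = p * pair B y x + q * pair B z x"
  unfolding pair_alt by (simp add: algebra_simps sum.distrib sum_distrib_left)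
lemma pair_lin_right: "pair B y (\<lambda>a. p * x a + q * z a) = p * pair B y x + q * pair B y z"
  unfolding pair_alt2 by (simp add: algebra_simps sum.distrib sum_distrib_left)
lemma pair_diff_left: "pair B (\<lambda>a. y a - q * z a) x = pair B y x - q * pair B z x"
  unfolding pair_alt by (simp add: algebra_simps sum_subtractf sum_distrib_left)
lemma pair_diff_right: "pair B y (\<lambda>a. x a - q * z a) = pair B y x - q * pair B y z"
  unfolding pair_alt2 by (simp add: algebra_simps sum_subtractf sum_distrib_left)
lemma pair_simple_simple: "pair B (simple i) (simple j) = B i j"
  by (simp add: pair_simple_left simple_mult)

lemma refl_apply: "refl B i x = (\<lambda>j. x j - pair B (simple i) x * simple i j)"
  by (simp add: refl_def fun_diff_def)

lemma crefl_tr: "crefl A i = refl (tr A) i"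
proof (rule ext)
  fix y
  have "simple j i = simple i j" for j :: 'a by (simp add: simple_def eq_commute)
  then show "crefl A i y = refl (tr A) i y"
    by (simp add: crefl_def refl_def fun_diff_def pair_tr)
qed

lemma cwact_tr: "cwact A ws = wact (tr A) ws"
  by (simp add: cwact_def wact_def crefl_tr)

lemma wact_Nil[simp]: "wact B [] = id" by (simp add: wact_def)
lemma wact_Cons[simp]: "wact B (i # ws) = refl B i \<circ> wact B ws" by (simp add: wact_def)
lemma wact_append: "wact B (xs @ ys) = wact B xs \<circ> wact B ys"
  by (induction xs) auto
lemma wact_append_apply: "wact B (xs @ ys) x = wact B xs (wact B ys x)"
  by (simp add: wact_append)

lemma refl_lin: "refl B i (\<lambda>j. p * x j + q * y j) = (\<lambda>j. p * refl B i x j + q * refl B i y j)"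
  by (rule ext) (simp add: refl_apply pair_lin_right algebra_simps)

lemma wact_lin: "wact B w (\<lambda>j. p * x j + q * y j) = (\<lambda>j. p * wact B w x j + q * wact B w y j)"
proof (induction w)
  case Nil then show ?case by simp
next
  case (Cons a w) then show ?case by (simp add: refl_lin)
qed

lemma wact_neg: "wact B w (\<lambda>j. - x j) = (\<lambda>j. - wact B w x j)"
  using wact_lin[of B w "-1" x 0 x] by simp

lemma wact_scale: "wact B w (\<lambda>j. p * x j) = (\<lambda>j. p * wact B w x j)"
  using wact_lin[of B w p x 0 x] by simp

lemma refl_refl: assumes "B i i = 2" shows "refl B i (refl B i x) = x"
proof -
  have "pair B (simple i) (refl B i x) = - pair B (simple i) x"
    unfolding refl_apply using assms by (simp add: pair_diff_right pair_simple_simple)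
  thus ?thesis by (simp add: refl_apply[of B i "refl B i x"]) (simp add: refl_apply)
qed

lemma wact_rev_wact: assumes "\<forall>i. B i i = 2" shows "wact B (rev w) (wact B w x) = x"
  using assms by (induction w arbitrary: x) (auto simp: wact_append_apply refl_refl)

lemma wact_wact_rev: assumes "\<forall>i. B i i = 2" shows "wact B w (wact B (rev w) x) = x"
  using wact_rev_wact[of B "rev w" x, OF assms] by simp

lemma refl_simple_self: assumes "B i i = 2" shows "refl B i (simple i) = (\<lambda>j. - simple i j)"
  using assms by (simp add: refl_apply pair_simple_simple)

lemma pair_invariant1:
  "pair B (refl (tr B) i y) (refl B i x) = pair B y x + pair B y (simple i) * pair B (simple i) x * (B i i - 2)"
proof -
  have r1: "refl (tr B) i y = (\<lambda>j. y j - pair B y (simple i) * simple i j)"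
    by (simp add: refl_apply pair_tr)
  show ?thesis
    unfolding r1 refl_apply[of B i x]
    by (simp only: pair_diff_left pair_diff_right pair_simple_simple) (simp add: algebra_simps)
qed

lemma pair_inv: assumes "\<forall>i. B i i = 2"
  shows "pair B (wact (tr B) w y) (wact B w x) = pair B y x"
proof (induction w arbitrary: x y)
  case Nil then show ?case by simp
next
  case (Cons a w)
  have "pair B (wact (tr B) (a # w) y) (wact B (a # w) x) = pair B (wact (tr B) w y) (wact B w x)"
    using pair_invariant1[of B a "wact (tr B) w y" "wact B w x"] assms by simp
  then show ?case using Cons by simp
qed

definition eqv :: "('i::finite \<Rightarrow> 'i \<Rightarrow> int) \<Rightarrow> 'i list \<Rightarrow> 'i list \<Rightarrow> bool" where
  "eqv B u v \<longleftrightarrow> wact B u = wact B v \<and> wact (tr B) u = wact (tr B) v"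

definition len :: "('i::finite \<Rightarrow> 'i \<Rightarrow> int) \<Rightarrow> 'i list \<Rightarrow> nat" where
  "len B w = (LEAST n. \<exists>u. length u = n \<and> eqv B u w)"

definition lenI :: "('i::finite \<Rightarrow> 'i \<Rightarrow> int) \<Rightarrow> 'i set \<Rightarrow> 'i list \<Rightarrow> nat" where
  "lenI B S w = (LEAST n. \<exists>u. set u \<subseteq> S \<and> length u = n \<and> eqv B u w)"

lemma eqv_refl[simp]: "eqv B u u" by (simp add: eqv_def)
lemma eqv_sym: "eqv B u v \<Longrightarrow> eqv B v u" by (simp add: eqv_def)
lemma eqv_trans: "eqv B u v \<Longrightarrow> eqv B v w \<Longrightarrow> eqv B u w" by (simp add: eqv_def)
lemma eqv_app: "eqv B u u' \<Longrightarrow> eqv B v v' \<Longrightarrow> eqv B (u @ v) (u' @ v')"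
  by (simp add: eqv_def wact_append)
lemma eqv_cancel: "B c c = 2 \<Longrightarrow> eqv B [c, c] []"
  by (auto simp: eqv_def refl_refl tr_def fun_eq_iff)

lemma len_le: "len B w \<le> length w"
  unfolding len_def by (rule Least_le) auto
lemma len_ex: "\<exists>u. length u = len B w \<and> eqv B u w"
  unfolding len_def by (rule LeastI_ex) (auto intro: eqv_refl)
lemma len_min: "eqv B u w \<Longrightarrow> len B w \<le> length u"
  unfolding len_def by (rule Least_le) auto
lemma len_eqv: assumes "eqv B u w" shows "len B u = len B w"
proof -
  obtain a where a: "length a = len B u" "eqv B a u" using len_ex by blast
  obtain b where b: "length b = len B w" "eqv B b w" using len_ex by blast
  have "len B w \<le> len B u" using len_min[of B a w] a assms eqv_trans by metis
  moreover have "len B u \<le> len B w" using len_min[of B b u] b assms eqv_trans eqv_sym by metis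
  ultimately show ?thesis by simp
qed
lemma len_app: "len B (u @ v) \<le> len B u + len B v"
proof -
  obtain a where a: "length a = len B u" "eqv B a u" using len_ex by blast
  obtain b where b: "length b = len B v" "eqv B b v" using len_ex by blast
  have "eqv B (a @ b) (u @ v)" using a b eqv_app by blast
  then show ?thesis using len_min[of B "a @ b" "u @ v"] a b by simp
qed

lemma lenI_le: "set w \<subseteq> S \<Longrightarrow> lenI B S w \<le> length w"
  unfolding lenI_def by (rule Least_le) auto
lemma lenI_ex: "set w \<subseteq> S \<Longrightarrow> \<exists>u. set u \<subseteq> S \<and> length u = lenI B S w \<and> eqv B u w"
  unfolding lenI_def by (rule LeastI_ex) auto
lemma lenI_min: "set u \<subseteq> S \<Longrightarrow> eqv B u w \<Longrightarrow> lenI B S w \<le> length u"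
  unfolding lenI_def by (rule Least_le) auto
lemma len_le_lenI: assumes "set w \<subseteq> S" shows "len B w \<le> lenI B S w"
proof -
  obtain a where "set a \<subseteq> S" "length a = lenI B S w" "eqv B a w" using lenI_ex[OF assms] by blast
  then show ?thesis using len_min[of B a w] by simp
qed
lemma lenI_eqv: assumes "eqv B u w" "set u \<subseteq> S" "set w \<subseteq> S" shows "lenI B S u = lenI B S w"
proof -
  obtain a where a: "set a \<subseteq> S" "length a = lenI B S u" "eqv B a u" using lenI_ex[OF assms(2)] by blast
  obtain b where b: "set b \<subseteq> S" "length b = lenI B S w" "eqv B b w" using lenI_ex[OF assms(3)] by blast
  have "lenI B S w \<le> lenI B S u" using lenI_min[of a S B w] a assms eqv_trans by metis
  moreover have "lenI B S u \<le> lenI B S w" using lenI_min[of b S B u] b assms eqv_trans eqv_sym by metis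
  ultimately show ?thesis by simp
qed

fun seq :: "int \<Rightarrow> int \<Rightarrow> nat \<Rightarrow> int \<times> int" where
  "seq a b 0 = (1, 0)"
| "seq a b (Suc k) = (let (p, q) = seq a b k in if even k then (p, b * p - q) else (a * q - p, q))"

lemma seq_inv:
  assumes "a \<ge> 0" "b \<ge> 0" "a * b \<ge> 4"
  shows "0 \<le> fst (seq a b k) \<and> 0 \<le> snd (seq a b k) \<and>
         (if even k then 2 * snd (seq a b k) \<le> b * fst (seq a b k) else 2 * fst (seq a b k) \<le> a * snd (seq a b k))"
proof (induction k)
  case 0 then show ?case using assms by simp
next
  case (Suc k)
  obtain p q where pq: "seq a b k = (p, q)" by (cases "seq a b k")
  show ?case
  proof (cases "even k")
    case True
    with Suc pq have h: "0 \<le> p" "0 \<le> q" "2 * q \<le> b * p" by auto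
    have h1: "a * (2 * q) \<le> a * (b * p)" using h(3) assms(1) by (rule mult_left_mono)
    have h2: "4 * p \<le> (a * b) * p" using assms(3) h(1) by (rule mult_right_mono)
    have "2 * p \<le> a * (b * p - q)" using h1 h2 h by (simp add: algebra_simps)
    then show ?thesis using True pq h by auto
  next
    case False
    with Suc pq have h: "0 \<le> p" "0 \<le> q" "2 * p \<le> a * q" by auto
    have h1: "b * (2 * p) \<le> b * (a * q)" using h(3) assms(2) by (rule mult_left_mono)
    have h2: "4 * q \<le> (a * b) * q" using assms(3) h(2) by (rule mult_right_mono)
    have "2 * q \<le> b * (a * q - p)" using h1 h2 h by (simp add: algebra_simps)
    moreover have "0 \<le> a * q - p" using h by simp
    ultimately show ?thesis using False pq h by auto
  qed
qed

lemma seq_fin: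
  assumes "(a, b) \<in> {(0,0),(1,1),(1,2),(2,1),(1,3),(3,1)}"
    and "L < (if a * b = 0 then 2 else if a * b = 1 then 3 else if a * b = 2 then 4 else (6::nat))"
  shows "0 \<le> fst (seq a b L) \<and> 0 \<le> snd (seq a b L)"
proof -
  have "L \<in> {0,1,2,3,4,5}" using assms by auto
  then show ?thesis using assms by (auto simp: eval_nat_numeral)
qed


fun alt :: "'i \<Rightarrow> 'i \<Rightarrow> nat \<Rightarrow> 'i list" where
  "alt s s' 0 = []"
| "alt s s' (Suc k) = (if even k then s' else s) # alt s s' k"

lemma alt_set: "set (alt s s' k) \<subseteq> {s, s'}" by (induction k) auto
lemma alt_length[simp]: "length (alt s s' k) = k" by (induction k) auto
lemma alt_last: "\<exists>P. alt s s' (Suc k) = P @ [s']"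
proof (induction k)
  case 0 then show ?case by simp
next
  case (Suc k) then obtain P where "alt s s' (Suc k) = P @ [s']" by blast
  then show ?case by (metis alt.simps(2) append_Cons)
qed
lemma alt_prefix: "\<exists>P. alt s s' (j + k) = P @ alt s s' k \<and> set P \<subseteq> {s, s'}"
proof (induction j)
  case 0 then show ?case by simp
next
  case (Suc j) then obtain P where "alt s s' (j + k) = P @ alt s s' k" "set P \<subseteq> {s, s'}" by blast
  then show ?case by (intro exI[of _ "(if even (j + k) then s' else s) # P"]) auto
qed

fun noadj :: "'a list \<Rightarrow> bool" where
  "noadj [] = True"
| "noadj [x] = True"
| "noadj (x # y # zs) = (x \<noteq> y \<and> noadj (y # zs))"

lemma not_noadj: "\<not> noadj u \<Longrightarrow> \<exists>x c y. u = x @ [c, c] @ y"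
proof (induction u rule: noadj.induct)
  case (3 x y zs)
  show ?case
  proof (cases "x = y")
    case True then show ?thesis by (intro exI[of _ "[]"]) auto
  next
    case False
    with 3 obtain a c b where "y # zs = a @ [c, c] @ b" by auto
    then show ?thesis by (intro exI[of _ "x # a"]) auto
  qed
qed auto

lemma noadj_alt:
  assumes "s \<noteq> s'" "set m \<subseteq> {s, s'}" "noadj m" "m = [] \<or> last m \<noteq> s"
  shows "m = alt s s' (length m)"
  using assms
proof (induction m)
  case Nil then show ?case by simp
next
  case (Cons c m)
  show ?case
  proof (cases m)
    case Nil then show ?thesis using Cons.prems by auto
  next
    case (Cons d m')
    have nm: "noadj m" using Cons.prems(3) \<open>m = d # m'\<close> by simp
    have "m = alt s s' (length m)"
      using Cons.IH[OF Cons.prems(1) _ nm] Cons.prems \<open>m = d # m'\<close> by auto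
    moreover have "c \<noteq> d" using Cons.prems(3) \<open>m = d # m'\<close> by simp
    ultimately show ?thesis using Cons.prems(1,2) \<open>m = d # m'\<close>
      by (cases "length m'") (auto split: if_splits)
  qed
qed


lemma refl_simple: "refl B i (simple j) = (\<lambda>l. simple j l - B i j * simple i l)"
  by (simp add: refl_apply pair_simple_simple)

lemma alt_simple:
  assumes "s \<noteq> s'" "B s s = 2" "B s' s' = 2"
  shows "wact B (alt s s' k) (simple s) =
     (\<lambda>j. fst (seq (- B s s') (- B s' s) k) * simple s j + snd (seq (- B s s') (- B s' s) k) * simple s' j)"
proof (induction k)
  case 0 then show ?case by (auto simp: fun_eq_iff simple_def)
next
  case (Suc k)
  obtain p q where pq: "seq (- B s s') (- B s' s) k = (p, q)" by (cases "seq (- B s s') (- B s' s) k")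
  have IH: "wact B (alt s s' k) (simple s) = (\<lambda>j. p * simple s j + q * simple s' j)"
    using Suc pq by simp
  have "wact B (alt s s' (Suc k)) (simple s) = refl B (if even k then s' else s) (\<lambda>j. p * simple s j + q * simple s' j)"
    by (simp add: IH)
  also have "\<dots> = (\<lambda>j. p * refl B (if even k then s' else s) (simple s) j + q * refl B (if even k then s' else s) (simple s') j)"
    by (rule refl_lin)
  also have "\<dots> = (\<lambda>j. p * (simple s j - B (if even k then s' else s) s * simple (if even k then s' else s) j)
                + q * (simple s' j - B (if even k then s' else s) s' * simple (if even k then s' else s) j))"
    by (simp only: refl_simple)
  also have "\<dots> = (\<lambda>j. fst (seq (- B s s') (- B s' s) (Suc k)) * simple s j + snd (seq (- B s s') (- B s' s) (Suc k)) * simple s' j)"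
    using pq assms by (auto simp: fun_eq_iff simple_def algebra_simps)
  finally show ?case .
qed

fun F :: "('i::finite \<Rightarrow> 'i \<Rightarrow> int) \<Rightarrow> 'i \<Rightarrow> 'i \<Rightarrow> ('i \<Rightarrow> int) \<Rightarrow> 'i list \<Rightarrow> int \<times> int" where
  "F B s s' x [] = (0, 0)"
| "F B s s' x (c # w) = (let (\<alpha>, \<beta>) = F B s s' x w;
      p = pair B (simple c) x + \<alpha> * B c s + \<beta> * B c s' in
      if c = s then (\<alpha> - p, \<beta>) else (\<alpha>, \<beta> - p))"

lemma refl_gen: "refl B i (\<lambda>j. x j + \<alpha> * simple s j + \<beta> * simple s' j) =
  (\<lambda>j. x j + \<alpha> * simple s j + \<beta> * simple s' j - (pair B (simple i) x + \<alpha> * B i s + \<beta> * B i s') * simple i j)"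
proof -
  have "pair B (simple i) (\<lambda>j. x j + \<alpha> * simple s j + \<beta> * simple s' j) = pair B (simple i) x + \<alpha> * B i s + \<beta> * B i s'"
  proof -
    have "pair B (simple i) (\<lambda>j. x j + \<alpha> * simple s j + \<beta> * simple s' j)
       = (\<Sum>j\<in>UNIV. x j * B i j) + \<alpha> * (\<Sum>j\<in>UNIV. simple s j * B i j) + \<beta> * (\<Sum>j\<in>UNIV. simple s' j * B i j)"
      by (simp add: pair_simple_left algebra_simps sum.distrib sum_distrib_left)
    also have "\<dots> = pair B (simple i) x + \<alpha> * B i s + \<beta> * B i s'"
      by (simp add: simple_mult pair_simple_left)
    finally show ?thesis .
  qed
  then show ?thesis by (simp add: refl_apply)
qed

lemma wact_I:
  assumes "s \<noteq> s'" "set w \<subseteq> {s, s'}"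
  shows "wact B w x = (\<lambda>j. x j + fst (F B s s' x w) * simple s j + snd (F B s s' x w) * simple s' j)"
  using assms(2)
proof (induction w)
  case Nil then show ?case by (simp add: fun_eq_iff)
next
  case (Cons c w)
  obtain \<alpha> \<beta> where ab: "F B s s' x w = (\<alpha>, \<beta>)" by (cases "F B s s' x w")
  have IH: "wact B w x = (\<lambda>j. x j + \<alpha> * simple s j + \<beta> * simple s' j)" using Cons ab by simp
  have "wact B (c # w) x = refl B c (\<lambda>j. x j + \<alpha> * simple s j + \<beta> * simple s' j)"
    by (simp add: IH)
  also have "\<dots> = (\<lambda>j. x j + \<alpha> * simple s j + \<beta> * simple s' j - (pair B (simple c) x + \<alpha> * B c s + \<beta> * B c s') * simple c j)"
    by (rule refl_gen)
  finally show ?case using Cons.prems assms(1) by (auto simp: ab fun_eq_iff algebra_simps)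
qed



lemma alt_2: "alt s s' 2 = [s, s']"
proof - have e: "(2::nat) = Suc(Suc 0)" by simp show ?thesis unfolding e by simp qed
lemma alt_3: "alt s s' 3 = [s', s, s']"
proof - have e: "(3::nat) = Suc(Suc(Suc 0))" by simp show ?thesis unfolding e by simp qed
lemma alt_4: "alt s s' 4 = [s, s', s, s']"
proof - have e: "(4::nat) = Suc(Suc(Suc(Suc 0)))" by simp show ?thesis unfolding e by simp qed
lemma alt_6: "alt s s' 6 = [s, s', s, s', s, s']"
proof - have e: "(6::nat) = Suc(Suc(Suc(Suc(Suc(Suc 0)))))" by simp show ?thesis unfolding e by simp qed

definition mord :: "int \<Rightarrow> nat" where
  "mord t = (if t = 0 then 2 else if t = 1 then 3 else if t = 2 then 4 else 6)"

lemma braid_F: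
  assumes "s \<noteq> s'" "B s s = 2" "B s' s' = 2" "B s s' = - a" "B s' s = - b"
    and "(a, b) \<in> {(0,0),(1,1),(1,2),(2,1),(1,3),(3,1)}"
  shows "F B s s' x (alt s s' (mord (a * b))) = F B s s' x (alt s' s (mord (a * b)))"
proof -
  have ne: "s' \<noteq> s" using assms(1) by blast
  consider "a = 0" "b = 0" | "a = 1" "b = 1" | "a = 1" "b = 2" | "a = 2" "b = 1" | "a = 1" "b = 3" | "a = 3" "b = 1"
    using assms(6) by auto
  then show ?thesis
  proof cases
    case 1 then show ?thesis using assms(1-5) ne by (simp add: mord_def alt_2 Let_def algebra_simps)
  next
    case 2 then show ?thesis using assms(1-5) ne by (simp add: mord_def alt_3 Let_def algebra_simps)
  next
    case 3 then show ?thesis using assms(1-5) ne by (simp add: mord_def alt_4 Let_def algebra_simps)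
  next
    case 4 then show ?thesis using assms(1-5) ne by (simp add: mord_def alt_4 Let_def algebra_simps)
  next
    case 5 then show ?thesis using assms(1-5) ne by (simp add: mord_def alt_6 Let_def algebra_simps)
  next
    case 6 then show ?thesis using assms(1-5) ne by (simp add: mord_def alt_6 Let_def algebra_simps)
  qed
qed

lemma braid_wact:
  assumes "s \<noteq> s'" "B s s = 2" "B s' s' = 2" "B s s' = - a" "B s' s = - b"
    and "(a, b) \<in> {(0,0),(1,1),(1,2),(2,1),(1,3),(3,1)}"
  shows "wact B (alt s s' (mord (a * b))) = wact B (alt s' s (mord (a * b)))"
proof (rule ext)
  fix x
  have s1: "set (alt s s' (mord (a * b))) \<subseteq> {s, s'}" by (rule alt_set)
  have s2: "set (alt s' s (mord (a * b))) \<subseteq> {s, s'}" using alt_set[of s' s] by blast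
  show "wact B (alt s s' (mord (a * b))) x = wact B (alt s' s (mord (a * b))) x"
    unfolding wact_I[OF assms(1) s1] wact_I[OF assms(1) s2] braid_F[OF assms] ..
qed


lemma gcm_diag: "gcm B \<Longrightarrow> B i i = 2" by (simp add: gcm_def)
lemma gcm_off: "gcm B \<Longrightarrow> i \<noteq> j \<Longrightarrow> B i j \<le> 0" by (simp add: gcm_def)
lemma gcm_zero: "gcm B \<Longrightarrow> B i j = 0 \<longleftrightarrow> B j i = 0" by (simp add: gcm_def)
lemma gcm_tr: "gcm B \<Longrightarrow> gcm (tr B)" by (auto simp: gcm_def tr_def)

lemma eqv_cancel_gcm: "gcm B \<Longrightarrow> eqv B (x @ [c, c] @ y) (x @ y)"
proof -
  assume g: "gcm B"
  have "eqv B [c, c] []" using eqv_cancel[of B c] gcm_diag[OF g] by simp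
  then have "eqv B ([c, c] @ y) ([] @ y)" using eqv_app[of B "[c,c]" "[]" y y] by simp
  then have "eqv B (x @ [c, c] @ y) (x @ [] @ y)" using eqv_app[of B x x] by simp
  then show ?thesis by simp
qed

lemma eqv_braid:
  assumes "gcm B" "s \<noteq> s'" "B s s' = - a" "B s' s = - b"
    and "(a, b) \<in> {(0,0),(1,1),(1,2),(2,1),(1,3),(3,1)}"
  shows "eqv B (alt s s' (mord (a * b))) (alt s' s (mord (a * b)))"
proof -
  have w1: "wact B (alt s s' (mord (a * b))) = wact B (alt s' s (mord (a * b)))"
    using braid_wact[OF assms(2) gcm_diag[OF assms(1)] gcm_diag[OF assms(1)] assms(3,4,5)] .
  have t: "tr B s s' = - b" "tr B s' s = - a" using assms(3,4) by (simp_all add: tr_def)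
  have ba: "(b, a) \<in> {(0,0),(1,1),(1,2),(2,1),(1,3),(3,1)}" using assms(5) by auto
  have w2: "wact (tr B) (alt s s' (mord (b * a))) = wact (tr B) (alt s' s (mord (b * a)))"
    using braid_wact[OF assms(2) gcm_diag[OF gcm_tr[OF assms(1)]] gcm_diag[OF gcm_tr[OF assms(1)]] t ba] .
  show ?thesis using w1 w2 by (simp add: eqv_def mult.commute)
qed

lemma rank2:
  assumes g: "gcm B" and ss: "s \<noteq> s'" and vI: "set v \<subseteq> {s, s'}"
    and hyp: "lenI B {s, s'} v \<le> lenI B {s, s'} (v @ [s])"
  shows "\<exists>p q. 0 \<le> p \<and> 0 \<le> q \<and> wact B v (simple s) = (\<lambda>j. p * simple s j + q * simple s' j)"
proof -
  define I where "I = {s, s'}"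
  obtain m where m: "set m \<subseteq> I" "length m = lenI B I v" "eqv B m v"
    using lenI_ex[of v I B] vI I_def by blast
  have MIN: "length m \<le> length u" if "set u \<subseteq> I" "eqv B u m" for u
  proof -
    have "eqv B u v" using that(2) m(3) by (rule eqv_trans)
    then show ?thesis using lenI_min[of u I B v] that(1) m(2) by simp
  qed
  have NS: False if "set u \<subseteq> I" "eqv B u m" "u = xs @ [s]" "length u \<le> length m" for u xs
  proof -
    have e1: "eqv B (v @ [s]) (m @ [s])" using eqv_app[OF eqv_sym[OF m(3)] eqv_refl[of B "[s]"]] .
    have e2: "eqv B (m @ [s]) (u @ [s])" using eqv_app[OF eqv_sym[OF that(2)] eqv_refl[of B "[s]"]] .
    have e3: "eqv B (u @ [s]) xs" using eqv_cancel_gcm[OF g, of xs s "[]"] that(3) by simp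
    have "eqv B xs (v @ [s])" using eqv_sym[OF eqv_trans[OF e1 eqv_trans[OF e2 e3]]] .
    moreover have "set xs \<subseteq> I" using that(1,3) by simp
    ultimately have "lenI B I (v @ [s]) \<le> length xs" using lenI_min[of xs I B "v @ [s]"] by simp
    then show False using hyp that(3,4) m(2) I_def by simp
  qed
  have na: "noadj m"
  proof (rule ccontr)
    assume "\<not> noadj m"
    then obtain x c y where xcy: "m = x @ [c, c] @ y" using not_noadj by blast
    have "eqv B (x @ y) m" using eqv_sym[OF eqv_cancel_gcm[OF g, of x c y]] xcy by simp
    moreover have "set (x @ y) \<subseteq> I" using m(1) xcy by auto
    ultimately have "length m \<le> length (x @ y)" using MIN[of "x @ y"] by simp
    then show False using xcy by simp
  qed
  have nl: "m = [] \<or> last m \<noteq> s"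
  proof (rule ccontr)
    assume "\<not> (m = [] \<or> last m \<noteq> s)"
    then have "m = butlast m @ [s]" by (metis append_butlast_last_id)
    then show False using NS[of m "butlast m"] m(1) by simp
  qed
  define L where "L = length m"
  have mL: "m = alt s s' L" using noadj_alt[OF ss _ na nl] m(1) I_def L_def by simp
  define a where "a = - B s s'"
  define b where "b = - B s' s"
  have a0: "0 \<le> a" using gcm_off[OF g ss] a_def by simp
  have b0: "0 \<le> b" using gcm_off[OF g, of s' s] ss b_def by simp
  have ab0: "a = 0 \<longleftrightarrow> b = 0" using gcm_zero[OF g, of s s'] a_def b_def by simp
  have wv: "wact B v (simple s) = (\<lambda>j. fst (seq a b L) * simple s j + snd (seq a b L) * simple s' j)"
    using m(3) mL alt_simple[of s s' B L, OF ss gcm_diag[OF g] gcm_diag[OF g]] a_def b_def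
    by (simp add: eqv_def)
  show ?thesis
  proof (cases "4 \<le> a * b")
    case True
    then show ?thesis using seq_inv[OF a0 b0 True, of L] wv by blast
  next
    case False
    have "a \<le> 3 \<and> b \<le> 3"
    proof (cases "a = 0")
      case True then show ?thesis using ab0 by simp
    next
      case nz: False
      then have "1 \<le> a" "1 \<le> b" using a0 b0 ab0 by auto
      then have "a \<le> a * b" "b \<le> a * b" by (simp_all add: mult_le_cancel_left1 mult_le_cancel_right1)
      then show ?thesis using False by simp
    qed
    then have da: "a = 0 \<or> a = 1 \<or> a = 2 \<or> a = 3" and db: "b = 0 \<or> b = 1 \<or> b = 2 \<or> b = 3"
      using a0 b0 by linarith+
    from da db False ab0 have fin: "(a, b) \<in> {(0,0),(1,1),(1,2),(2,1),(1,3),(3,1)}"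
      by (elim disjE) simp_all
    define M where "M = mord (a * b)"
    have br: "eqv B (alt s s' M) (alt s' s M)"
      using eqv_braid[OF g ss _ _ fin] a_def b_def M_def by simp
    have M2: "2 \<le> M" by (simp add: M_def mord_def)
    have LM: "L < M"
    proof (rule ccontr)
      assume "\<not> L < M"
      then consider "L = M" | "M < L" by linarith
      then show False
      proof cases
        case 1
        obtain P where P: "alt s' s (Suc (M - 1)) = P @ [s]" using alt_last[of s' s "M - 1"] by blast
        have "Suc (M - 1) = M" using M2 by simp
        then have h1: "alt s' s M = P @ [s]" using P by simp
        have h2: "eqv B (alt s' s M) m" using eqv_sym[OF br] mL 1 by simp
        have h3: "set (alt s' s M) \<subseteq> I" using alt_set[of s' s M] I_def by auto
        have h4: "length (alt s' s M) \<le> length m" using 1 L_def by simp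
        show False by (rule NS[OF h3 h2 h1 h4])
      next
        case 2
        obtain P where P: "alt s s' ((L - M - 1) + Suc M) = P @ alt s s' (Suc M)" "set P \<subseteq> {s, s'}"
          using alt_prefix[of s s' "L - M - 1" "Suc M"] by (elim exE conjE) (rule that)
        have Leq: "(L - M - 1) + Suc M = L" using 2 by linarith
        have mP: "m = P @ alt s s' (Suc M)"
        proof -
          have "m = alt s s' L" by (rule mL)
          also have "\<dots> = alt s s' ((L - M - 1) + Suc M)" by (simp only: Leq)
          also have "\<dots> = P @ alt s s' (Suc M)" by (rule P(1))
          finally show ?thesis .
        qed
        define x where "x = (if even M then s' else s)"
        have a1: "alt s s' (Suc M) = [x] @ alt s s' M" by (simp add: x_def)
        have a2: "alt s' s M = [x] @ alt s' s (M - 1)"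
        proof -
          have SM: "Suc (M - 1) = M" using M2 by simp
          have ev: "even (M - 1) \<longleftrightarrow> odd M" using M2 by (cases M) auto
          have xx: "(if even (M - 1) then s else s') = x" by (simp only: ev x_def) simp
          have "alt s' s M = alt s' s (Suc (M - 1))" by (simp only: SM)
          also have "\<dots> = (if even (M - 1) then s else s') # alt s' s (M - 1)" by (rule alt.simps(2))
          also have "\<dots> = [x] @ alt s' s (M - 1)" by (simp only: xx) simp
          finally show ?thesis .
        qed
        have mx: "m = (P @ [x]) @ alt s s' M" using mP a1 by simp
        have e1: "eqv B m ((P @ [x]) @ alt s' s M)"
          unfolding mx by (rule eqv_app[OF eqv_refl[of B "P @ [x]"] br])
        have e2: "eqv B ((P @ [x]) @ alt s' s M) (P @ alt s' s (M - 1))"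
          using eqv_cancel_gcm[OF g, of P x "alt s' s (M - 1)"] a2 by simp
        have "eqv B (P @ alt s' s (M - 1)) m" using eqv_sym[OF eqv_trans[OF e1 e2]] .
        moreover have "set (P @ alt s' s (M - 1)) \<subseteq> I" using P(2) alt_set[of s' s "M - 1"] I_def by auto
        ultimately have "length m \<le> length (P @ alt s' s (M - 1))" using MIN[of "P @ alt s' s (M - 1)"] by simp
        moreover have "length m = length P + Suc M" using mP by simp
        ultimately show False using M2 by simp
      qed
    qed
    have "0 \<le> fst (seq a b L) \<and> 0 \<le> snd (seq a b L)"
      using seq_fin[OF fin] LM by (simp add: M_def mord_def)
    then show ?thesis using wv by blast
  qed
qed


lemma lenI_cons: assumes "set w \<subseteq> S" "c \<in> S" shows "lenI B S (c # w) \<le> lenI B S w + 1"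
proof -
  obtain u where u: "set u \<subseteq> S" "length u = lenI B S w" "eqv B u w" using lenI_ex[OF assms(1)] by blast
  have "eqv B (c # u) (c # w)" using eqv_app[OF eqv_refl[of B "[c]"] u(3)] by simp
  moreover have "set (c # u) \<subseteq> S" using u(1) assms(2) by simp
  ultimately have "lenI B S (c # w) \<le> length (c # u)" using lenI_min[of "c # u" S B "c # w"] by simp
  then show ?thesis using u(2) by simp
qed

lemma pos_main:
  assumes g: "gcm B"
  shows "len B ws \<le> len B (ws @ [s]) \<Longrightarrow> \<forall>j. 0 \<le> wact B ws (simple s) j"
proof (induction "len B ws" arbitrary: ws s rule: less_induct)
  case less
  obtain r where r: "length r = len B ws" "eqv B r ws" using len_ex by blast
  show ?case
  proof (cases "len B ws = 0")
    case True
    then have "r = []" using r(1) by simp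
    then have "wact B ws = id" using r(2) by (simp add: eqv_def)
    then show ?thesis by (simp add: simple_def)
  next
    case False
    then obtain r0 s' where r0: "r = r0 @ [s']" using r(1) by (metis length_0_conv rev_exhaust)
    have lr0: "length r0 + 1 = len B ws" using r(1) r0 by simp
    have ss: "s' \<noteq> s"
    proof
      assume "s' = s"
      have "eqv B (ws @ [s]) (r @ [s])" using eqv_app[OF eqv_sym[OF r(2)] eqv_refl[of B "[s]"]] .
      moreover have "eqv B (r @ [s]) r0" using eqv_cancel_gcm[OF g, of r0 s "[]"] r0 \<open>s' = s\<close> by simp
      ultimately have "eqv B r0 (ws @ [s])" by (metis eqv_sym eqv_trans)
      then have "len B (ws @ [s]) \<le> length r0" by (rule len_min)
      then show False using less.prems lr0 by simp
    qed
    define I where "I = {s, s'}"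
    define Q where "Q = (\<lambda>(v, vI). set vI \<subseteq> I \<and> eqv B (v @ vI) ws \<and> len B v + lenI B I vI \<le> len B ws)"
    have Q0: "Q (r0, [s'])"
    proof -
      have "len B r0 \<le> length r0" by (rule len_le)
      moreover have "lenI B I [s'] \<le> 1" using lenI_le[of "[s']" I B] I_def by simp
      ultimately show ?thesis using r r0 lr0 I_def by (simp add: Q_def)
    qed
    obtain y where Qy: "Q y" and miny: "\<forall>z. Q z \<longrightarrow> len B (fst y) \<le> len B (fst z)"
      using ex_has_least_nat[of Q "(r0, [s'])" "\<lambda>y. len B (fst y)", OF Q0] by blast
    obtain v vI where yv: "y = (v, vI)" by (cases y)
    have Qv: "Q (v, vI)" using Qy yv by simp
    have minv: "len B v \<le> len B (fst z)" if "Q z" for z using miny that yv by (cases z) auto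
    have vI: "set vI \<subseteq> I" and ev: "eqv B (v @ vI) ws" and lsum: "len B v + lenI B I vI \<le> len B ws"
      using Qv by (auto simp: Q_def)
    have lt: "len B v < len B ws"
      using minv[OF Q0] len_le[of B r0] lr0 by simp
    have C: "len B v \<le> len B (v @ [t])" if t: "t \<in> I" for t
    proof (rule ccontr)
      assume a: "\<not> len B v \<le> len B (v @ [t])"
      have "eqv B ((v @ [t]) @ (t # vI)) (v @ vI)" using eqv_cancel_gcm[OF g, of v t vI] by simp
      then have e: "eqv B ((v @ [t]) @ (t # vI)) ws" using ev by (rule eqv_trans)
      have "lenI B I (t # vI) \<le> lenI B I vI + 1" by (rule lenI_cons[OF vI t])
      then have "Q (v @ [t], t # vI)" using a e vI t lsum by (simp add: Q_def)
      then have "len B v \<le> len B (v @ [t])" using minv[of "(v @ [t], t # vI)"] by simp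
      then show False using a by simp
    qed
    have "len B v \<le> len B (v @ [s])" using C I_def by simp
    then have hs: "\<forall>j. 0 \<le> wact B v (simple s) j" using less.hyps[OF lt] by blast
    have "len B v \<le> len B (v @ [s'])" using C I_def by simp
    then have hs': "\<forall>j. 0 \<le> wact B v (simple s') j" using less.hyps[OF lt] by blast
    have C3: "lenI B I vI \<le> lenI B I (vI @ [s])"
    proof (rule ccontr)
      assume a: "\<not> lenI B I vI \<le> lenI B I (vI @ [s])"
      have "eqv B (v @ (vI @ [s])) (ws @ [s])" using eqv_app[OF ev eqv_refl[of B "[s]"]] by simp
      then have "len B (ws @ [s]) = len B (v @ (vI @ [s]))" using len_eqv by metis
      also have "\<dots> \<le> len B v + len B (vI @ [s])" by (rule len_app)
      also have "\<dots> \<le> len B v + lenI B I (vI @ [s])" using len_le_lenI[of "vI @ [s]" I B] vI I_def by simp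
      finally show False using a lsum less.prems by simp
    qed
    obtain p q where pq: "0 \<le> p" "0 \<le> q" "wact B vI (simple s) = (\<lambda>j. p * simple s j + q * simple s' j)"
      using rank2[OF g ss[symmetric] _ C3[unfolded I_def]] vI I_def by blast
    have "wact B ws (simple s) = wact B (v @ vI) (simple s)" using ev by (simp add: eqv_def)
    also have "\<dots> = wact B v (\<lambda>j. p * simple s j + q * simple s' j)" by (simp add: wact_append pq(3))
    also have "\<dots> = (\<lambda>j. p * wact B v (simple s) j + q * wact B v (simple s') j)" by (rule wact_lin)
    finally show ?thesis using pq hs hs' by simp
  qed
qed

lemma root_sign:
  assumes g: "gcm B"
  shows "(\<forall>j. 0 \<le> wact B ws (simple i) j) \<or> (\<forall>j. wact B ws (simple i) j \<le> 0)"
proof (cases "len B ws \<le> len B (ws @ [i])")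
  case True then show ?thesis using pos_main[OF g] by blast
next
  case False
  have "eqv B ((ws @ [i]) @ [i]) ws" using eqv_cancel_gcm[OF g, of ws i "[]"] by simp
  then have "len B ((ws @ [i]) @ [i]) = len B ws" by (rule len_eqv)
  then have "\<forall>j. 0 \<le> wact B (ws @ [i]) (simple i) j" using pos_main[OF g, of "ws @ [i]" i] False by simp
  moreover have "wact B (ws @ [i]) (simple i) = (\<lambda>j. - wact B ws (simple i) j)"
    by (simp add: wact_append refl_simple_self[OF gcm_diag[OF g]] wact_neg)
  ultimately show ?thesis by auto
qed

lemma wact_inj: assumes g: "gcm B" and "wact B w x = wact B w y" shows "x = y"
  using wact_rev_wact[of B w x] wact_rev_wact[of B w y] assms gcm_diag[OF g] by metis

lemma faithful:
  assumes g: "gcm B" and pos: "\<And>k j. 0 \<le> wact B u (simple k) j"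
  shows "eqv B u []"
proof (rule ccontr)
  assume ne: "\<not> eqv B u []"
  obtain r where r: "length r = len B u" "eqv B r u" using len_ex by blast
  have "r \<noteq> []" proof assume "r = []" then show False using r(2) ne eqv_sym[of B "[]" u] by simp qed
  then obtain r0 k where r0: "r = r0 @ [k]" by (metis rev_exhaust)
  have "len B r0 \<le> length r0" by (rule len_le)
  moreover have "len B (r0 @ [k]) = len B u" using len_eqv[OF r(2)] r0 by simp
  ultimately have "len B r0 \<le> len B (r0 @ [k])" using r(1) r0 by simp
  then have h: "\<forall>j. 0 \<le> wact B r0 (simple k) j" using pos_main[OF g] by blast
  have "wact B u (simple k) = wact B r (simple k)" using r(2) by (simp add: eqv_def)
  also have "\<dots> = (\<lambda>j. - wact B r0 (simple k) j)"
    by (simp add: r0 wact_append refl_simple_self[OF gcm_diag[OF g]] wact_neg)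
  finally have "\<forall>j. wact B r0 (simple k) j = 0"
  proof -
    assume eq: "wact B u (simple k) = (\<lambda>j. - wact B r0 (simple k) j)"
    show ?thesis
    proof
      fix j
      have "0 \<le> - wact B r0 (simple k) j" using pos[of k j] eq by (simp add: fun_eq_iff)
      then show "wact B r0 (simple k) j = 0" using h by (metis antisym neg_0_le_iff_le)
    qed
  qed
  then have "wact B r0 (simple k) = wact B r0 (\<lambda>j. 0)" using wact_scale[of B r0 0 "simple k"] by auto
  then have "simple k = (\<lambda>j. 0)" by (rule wact_inj[OF g])
  then show False by (metis simple_def zero_neq_one)
qed


lemma conj_formula:
  assumes g: "gcm B"
  shows "wact B (u @ [i] @ rev u) x = (\<lambda>j. x j - pair B (wact (tr B) u (simple i)) x * wact B u (simple i) j)"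
proof -
  have d: "\<forall>i. B i i = 2" using gcm_diag[OF g] by blast
  define z where "z = wact B (rev u) x"
  have P: "pair B (simple i) z = pair B (wact (tr B) u (simple i)) x"
    using pair_inv[of B u "simple i" z, OF d] wact_wact_rev[of B u x, OF d] z_def by simp
  have "wact B (u @ [i] @ rev u) x = wact B u (refl B i z)" by (simp add: wact_append z_def)
  also have "refl B i z = (\<lambda>j. 1 * z j + (- pair B (simple i) z) * simple i j)"
    by (simp add: refl_apply)
  also have "wact B u \<dots> = (\<lambda>j. 1 * wact B u z j + (- pair B (simple i) z) * wact B u (simple i) j)"
    by (rule wact_lin)
  also have "wact B u z = x" using wact_wact_rev[of B u x, OF d] z_def by simp
  finally show ?thesis using P by simp
qed

lemma refl_sub: assumes "B j j = 2"
  shows "refl B j (\<lambda>l. x l - t * simple j l) = (\<lambda>l. x l - t * simple j l - (pair B (simple j) x - t * 2) * simple j l)"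
  using assms by (simp add: refl_apply pair_diff_right pair_simple_simple)

lemma coroot_unique:
  assumes g: "gcm B" and u: "wact B u (simple i) = simple j"
  shows "wact (tr B) u (simple i) = simple j"
proof -
  have d: "\<forall>i. B i i = 2" using gcm_diag[OF g] by blast
  define c where "c = wact (tr B) u (simple i)"
  have pc: "pair B c (simple j) = 2"
    using pair_inv[of B u "simple i" "simple i", OF d] u c_def by (simp add: pair_simple_simple d)
  define v where "v = [j] @ (u @ [i] @ rev u)"
  have wv: "wact B v x = refl B j (\<lambda>l. x l - pair B c x * simple j l)" for x
    using conj_formula[OF g, of u i x] u c_def by (simp add: v_def)
  have wvk: "wact B v (simple k) = (\<lambda>l. simple k l + (pair B c (simple k) - B j k) * simple j l)" for k
    unfolding wv refl_sub[OF gcm_diag[OF g]] by (auto simp: fun_eq_iff pair_simple_simple algebra_simps)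
  have pos: "0 \<le> wact B v (simple k) l" for k l
  proof (cases "k = j")
    case True then show ?thesis unfolding wvk using pc d by (simp add: simple_def)
  next
    case False
    have "wact B v (simple k) k = 1" unfolding wvk using False by (simp add: simple_def)
    then have "\<not> (\<forall>l. wact B v (simple k) l \<le> 0)" by (metis not_one_le_zero)
    then show ?thesis using root_sign[OF g, of v k] by blast
  qed
  have "eqv B v []" using faithful[OF g pos] .
  then have id: "wact (tr B) v (simple j) = simple j" by (simp add: eqv_def)
  have dt: "\<forall>i. tr B i i = 2" using d by (simp add: tr_def)
  have "wact (tr B) v (simple j) = refl (tr B) j (\<lambda>l. simple j l - pair (tr B) (wact B u (simple i)) (simple j) * c l)"
    using conj_formula[OF gcm_tr[OF g], of u i "simple j"] by (simp add: v_def c_def)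
  also have "pair (tr B) (wact B u (simple i)) (simple j) = 2" using u by (simp add: pair_simple_simple tr_def d)
  finally have e: "wact (tr B) v (simple j) = refl (tr B) j (\<lambda>l. simple j l - 2 * c l)" .
  have p2: "pair (tr B) (simple j) (\<lambda>l. simple j l - 2 * c l) = - 2"
    by (simp add: pair_diff_right pair_simple_simple pair_tr pc dt)
  have "refl (tr B) j (\<lambda>l. simple j l - 2 * c l) = (\<lambda>l. 3 * simple j l - 2 * c l)"
    unfolding refl_apply p2 by (simp add: fun_eq_iff algebra_simps)
  then have "(\<lambda>l. 3 * simple j l - 2 * c l) = simple j" using e id by simp
  then show ?thesis unfolding c_def[symmetric] by (auto simp: fun_eq_iff)
qed

lemma coroot_eq:
  assumes g: "gcm A" and b: "\<beta> = wact A ws (simple i)"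
  shows "coroot A \<beta> = cwact A ws (simple i)"
  unfolding coroot_def
proof (rule the_equality)
  show "\<exists>ws' i'. \<beta> = wact A ws' (simple i') \<and> cwact A ws (simple i) = cwact A ws' (simple i')"
    using b by blast
next
  fix c assume "\<exists>ws' i'. \<beta> = wact A ws' (simple i') \<and> c = cwact A ws' (simple i')"
  then obtain ws' i' where w': "\<beta> = wact A ws' (simple i')" "c = cwact A ws' (simple i')" by blast
  have d: "\<forall>i. A i i = 2" using gcm_diag[OF g] by blast
  have dt: "\<forall>i. tr A i i = 2" using d by (simp add: tr_def)
  have "wact A (rev ws' @ ws) (simple i) = simple i'"
    using b w'(1) wact_rev_wact[of A ws' "simple i'", OF d] by (simp add: wact_append)
  then have "wact (tr A) (rev ws' @ ws) (simple i) = simple i'" by (rule coroot_unique[OF g])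
  then have "wact (tr A) ws' (wact (tr A) (rev ws') (wact (tr A) ws (simple i))) = wact (tr A) ws' (simple i')"
    by (simp add: wact_append)
  then show "c = cwact A ws (simple i)" using w'(2) wact_wact_rev[of "tr A" ws' "wact (tr A) ws (simple i)", OF dt] by (simp add: cwact_tr)
qed

lemma srefl_eq:
  assumes g: "gcm A" and b: "\<beta> = wact A ws (simple i)"
  shows "srefl A \<beta> = (\<lambda>x j. x j - pair A (coroot A \<beta>) x * \<beta> j)"
proof -
  have key: "wact A ws' \<circ> refl A i' \<circ> wact A (rev ws') = (\<lambda>x j. x j - pair A (coroot A \<beta>) x * \<beta> j)"
    if "\<beta> = wact A ws' (simple i')" for ws' i'
  proof (rule ext)
    fix x
    have "(wact A ws' \<circ> refl A i' \<circ> wact A (rev ws')) x = wact A (ws' @ [i'] @ rev ws') x"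
      by (simp add: wact_append)
    also have "\<dots> = (\<lambda>j. x j - pair A (wact (tr A) ws' (simple i')) x * wact A ws' (simple i') j)"
      by (rule conj_formula[OF g])
    finally show "(wact A ws' \<circ> refl A i' \<circ> wact A (rev ws')) x = (\<lambda>j. x j - pair A (coroot A \<beta>) x * \<beta> j)"
      using coroot_eq[OF g that] that by (simp add: cwact_tr)
  qed
  show ?thesis unfolding srefl_def
  proof (rule the_equality)
    show "\<exists>ws' i'. \<beta> = wact A ws' (simple i') \<and> (\<lambda>x j. x j - pair A (coroot A \<beta>) x * \<beta> j) = wact A ws' \<circ> refl A i' \<circ> wact A (rev ws')"
      using b key[OF b] by metis
  next
    fix f assume "\<exists>ws' i'. \<beta> = wact A ws' (simple i') \<and> f = wact A ws' \<circ> refl A i' \<circ> wact A (rev ws')"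
    then show "f = (\<lambda>x j. x j - pair A (coroot A \<beta>) x * \<beta> j)" using key by blast
  qed
qed


lemma roots_iff: "\<beta> \<in> roots A \<longleftrightarrow> (\<exists>ws i. \<beta> = wact A ws (simple i))"
  by (auto simp: roots_def)

lemma pos_roots_iff: "\<beta> \<in> pos_roots A \<longleftrightarrow> \<beta> \<in> roots A \<and> (\<forall>j. 0 \<le> \<beta> j)"
  by (simp add: pos_roots_def)

lemma roots_neg: assumes g: "gcm A" and b: "\<beta> \<in> roots A" shows "(\<lambda>j. - \<beta> j) \<in> roots A"
proof -
  obtain ws i where w: "\<beta> = wact A ws (simple i)" using b roots_iff by blast
  have "wact A (ws @ [i]) (simple i) = (\<lambda>j. - \<beta> j)"
    using w by (simp add: wact_append refl_simple_self[OF gcm_diag[OF g]] wact_neg)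
  then show ?thesis using roots_iff by metis
qed

lemma neg_roots_iff: assumes g: "gcm A"
  shows "x \<in> neg_roots A \<longleftrightarrow> x \<in> roots A \<and> (\<forall>j. x j \<le> 0)"
proof
  assume "x \<in> neg_roots A"
  then obtain y where y: "y \<in> pos_roots A" "x = - y" by (auto simp: neg_roots_def)
  then have "x = (\<lambda>j. - y j)" by (simp add: fun_Compl_def)
  then show "x \<in> roots A \<and> (\<forall>j. x j \<le> 0)" using y roots_neg[OF g, of y] by (auto simp: pos_roots_iff)
next
  assume a: "x \<in> roots A \<and> (\<forall>j. x j \<le> 0)"
  have "(\<lambda>j. - x j) \<in> pos_roots A" using a roots_neg[OF g, of x] by (auto simp: pos_roots_iff)
  moreover have "x = - (\<lambda>j. - x j)" by (simp add: fun_Compl_def)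
  ultimately show "x \<in> neg_roots A" unfolding neg_roots_def by blast
qed

lemma root_sign_A: assumes g: "gcm A" and b: "\<beta> \<in> roots A"
  shows "(\<forall>j. 0 \<le> \<beta> j) \<or> (\<forall>j. \<beta> j \<le> 0)"
  using b root_sign[OF g] roots_iff by metis

lemma root_nz: assumes g: "gcm A" and b: "\<beta> \<in> roots A" shows "\<exists>j. \<beta> j \<noteq> 0"
proof (rule ccontr)
  assume "\<not> (\<exists>j. \<beta> j \<noteq> 0)"
  then have z: "\<beta> = (\<lambda>j. 0)" by auto
  obtain ws i where w: "\<beta> = wact A ws (simple i)" using b roots_iff by blast
  have "wact A ws (simple i) = wact A ws (\<lambda>j. 0)" using w z wact_scale[of A ws 0 "simple i"] by simp
  then have "simple i = (\<lambda>j. 0)" by (rule wact_inj[OF g])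
  then show False by (metis simple_def zero_neq_one)
qed

lemma pos_not_neg: assumes g: "gcm A" and "\<beta> \<in> pos_roots A" shows "\<beta> \<notin> neg_roots A"
proof
  assume "\<beta> \<in> neg_roots A"
  then have "\<forall>j. \<beta> j = 0" using assms by (auto simp: neg_roots_iff[OF g] pos_roots_iff intro: antisym)
  then show False using root_nz[OF g] assms(2) by (auto simp: pos_roots_iff)
qed

lemma root_cases: assumes g: "gcm A" and b: "\<beta> \<in> roots A" shows "\<beta> \<in> pos_roots A \<or> \<beta> \<in> neg_roots A"
  using root_sign_A[OF g b] b by (auto simp: neg_roots_iff[OF g] pos_roots_iff)

lemma roots_refl: "\<beta> \<in> roots A \<Longrightarrow> refl A k \<beta> \<in> roots A"
proof -
  assume "\<beta> \<in> roots A"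
  then obtain ws i where "\<beta> = wact A ws (simple i)" using roots_iff by blast
  then have "refl A k \<beta> = wact A (k # ws) (simple i)" by simp
  then show ?thesis using roots_iff by blast
qed

lemma simple_root: "simple i \<in> roots A"
  using roots_iff[of "simple i" A] by (metis id_apply wact_Nil)

lemma simple_pos: "simple i \<in> pos_roots A"
  using simple_root by (auto simp: pos_roots_iff simple_def)

lemma root_simple_mult: assumes g: "gcm A" and b: "\<beta> \<in> roots A" and m: "\<beta> = (\<lambda>j. m * simple i j)"
  shows "m = 1 \<or> m = -1"
proof -
  have d: "\<forall>i. A i i = 2" using gcm_diag[OF g] by blast
  obtain ws k where w: "\<beta> = wact A ws (simple k)" using b roots_iff by blast
  have "simple k = wact A (rev ws) \<beta>" using wact_rev_wact[of A ws "simple k", OF d] w by simp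
  also have "\<dots> = (\<lambda>j. m * wact A (rev ws) (simple i) j)" using m wact_scale by simp
  finally have "m * wact A (rev ws) (simple i) k = 1" by (metis simple_def)
  then show ?thesis by (simp add: zmult_eq_1_iff) (metis)
qed

lemma pos_other: assumes g: "gcm A" and b: "\<beta> \<in> pos_roots A" and ne: "\<beta> \<noteq> simple i"
  shows "\<exists>j. j \<noteq> i \<and> 0 < \<beta> j"
proof (rule ccontr)
  assume "\<not> (\<exists>j. j \<noteq> i \<and> 0 < \<beta> j)"
  then have z: "\<forall>j. j \<noteq> i \<longrightarrow> \<beta> j = 0" using b by (auto simp: pos_roots_iff) (meson antisym not_le)
  then have e: "\<beta> = (\<lambda>j. \<beta> i * simple i j)" by (auto simp: fun_eq_iff simple_def)
  then have "\<beta> i = 1 \<or> \<beta> i = -1" using root_simple_mult[OF g _ e] b by (simp add: pos_roots_iff)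
  moreover have "0 \<le> \<beta> i" using b by (simp add: pos_roots_iff)
  ultimately have "\<beta> i = 1" by auto
  then have "\<beta> = simple i" using e by simp
  then show False using ne by simp
qed

lemma refl_other: "j \<noteq> i \<Longrightarrow> refl A i x j = x j"
  by (simp add: refl_apply simple_def)

lemma refl_pos: assumes g: "gcm A" and b: "\<beta> \<in> pos_roots A" and ne: "\<beta> \<noteq> simple i"
  shows "refl A i \<beta> \<in> pos_roots A"
proof -
  obtain j where j: "j \<noteq> i" "0 < \<beta> j" using pos_other[OF g b ne] by blast
  have r: "refl A i \<beta> \<in> roots A" using roots_refl b by (auto simp: pos_roots_iff)
  have "refl A i \<beta> j > 0" using j refl_other by metis
  then have "\<not> (\<forall>j. refl A i \<beta> j \<le> 0)" by (metis not_le)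
  then show ?thesis using root_sign_A[OF g r] r by (auto simp: pos_roots_iff)
qed

lemma coroot_simple: assumes g: "gcm A" shows "coroot A (simple i) = simple i"
  using coroot_eq[OF g, of "simple i" "[]" i] by (simp add: cwact_def)

lemma coroot_refl: assumes g: "gcm A" and b: "\<beta> \<in> roots A"
  shows "coroot A (refl A k \<beta>) = crefl A k (coroot A \<beta>)"
proof -
  obtain ws i where w: "\<beta> = wact A ws (simple i)" using b roots_iff by blast
  have "refl A k \<beta> = wact A (k # ws) (simple i)" using w by simp
  then have "coroot A (refl A k \<beta>) = cwact A (k # ws) (simple i)" by (rule coroot_eq[OF g])
  also have "\<dots> = crefl A k (cwact A ws (simple i))" by (simp add: cwact_def)
  also have "cwact A ws (simple i) = coroot A \<beta>" using coroot_eq[OF g w] by simp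
  finally show ?thesis .
qed

lemma pair_coroot_self: assumes g: "gcm A" and b: "\<beta> \<in> roots A"
  shows "pair A (coroot A \<beta>) \<beta> = 2"
proof -
  have d: "\<forall>i. A i i = 2" using gcm_diag[OF g] by blast
  obtain ws i where w: "\<beta> = wact A ws (simple i)" using b roots_iff by blast
  show ?thesis using coroot_eq[OF g w] w pair_inv[of A ws "simple i" "simple i", OF d]
    by (simp add: cwact_tr pair_simple_simple d)
qed

lemma pair_crefl: assumes g: "gcm A"
  shows "pair A (crefl A i y) x = pair A y (refl A i x)"
proof -
  have "pair A (crefl A i y) x = pair A (refl (tr A) i y) (refl A i (refl A i x))"
    using refl_refl[of A i x] gcm_diag[OF g] by (simp add: crefl_tr)
  also have "\<dots> = pair A y (refl A i x)" using pair_invariant1[of A i y "refl A i x"] gcm_diag[OF g, of i] by simp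
  finally show ?thesis .
qed

lemma S_root: assumes g: "gcm A" and b: "\<beta> \<in> roots A" and c: "\<gamma> \<in> roots A"
  shows "(\<lambda>j. \<gamma> j - pair A (coroot A \<beta>) \<gamma> * \<beta> j) \<in> roots A"
proof -
  obtain ws i where w: "\<beta> = wact A ws (simple i)" using b roots_iff by blast
  obtain ws' i' where w': "\<gamma> = wact A ws' (simple i')" using c roots_iff by blast
  have "wact A (ws @ [i] @ rev ws) \<gamma> = (\<lambda>j. \<gamma> j - pair A (coroot A \<beta>) \<gamma> * \<beta> j)"
    using conj_formula[OF g, of ws i \<gamma>] coroot_eq[OF g w] w by (simp add: cwact_tr)
  moreover have "wact A (ws @ [i] @ rev ws) \<gamma> = wact A ((ws @ [i] @ rev ws) @ ws') (simple i')"
    using w' by (simp add: wact_append)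
  ultimately show ?thesis using roots_iff by metis
qed

lemma S_neg: assumes g: "gcm A" and b: "\<beta> \<in> pos_roots A" and ne: "\<beta> \<noteq> simple i"
  and k: "1 \<le> pair A (coroot A \<beta>) (simple i)"
  shows "(\<lambda>j. simple i j - pair A (coroot A \<beta>) (simple i) * \<beta> j) \<in> neg_roots A"
proof -
  obtain j where j: "j \<noteq> i" "0 < \<beta> j" using pos_other[OF g b ne] by blast
  have r: "(\<lambda>j. simple i j - pair A (coroot A \<beta>) (simple i) * \<beta> j) \<in> roots A"
    using S_root[OF g _ simple_root] b by (auto simp: pos_roots_iff)
  have "0 < pair A (coroot A \<beta>) (simple i) * \<beta> j" using k j by simp
  then have "simple i j - pair A (coroot A \<beta>) (simple i) * \<beta> j < 0" using j by (simp add: simple_def)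
  then have "\<not> (\<forall>l. 0 \<le> simple i l - pair A (coroot A \<beta>) (simple i) * \<beta> l)" by (metis not_le)
  then show ?thesis using root_sign_A[OF g r] r by (auto simp: neg_roots_iff[OF g])
qed

lemma quantum_char: assumes g: "gcm A"
  shows "\<beta> \<in> quantum_roots A \<longleftrightarrow> \<beta> \<in> pos_roots A \<and>
    (\<forall>\<gamma>. \<gamma> \<in> pos_roots A \<longrightarrow> (\<lambda>j. \<gamma> j - pair A (coroot A \<beta>) \<gamma> * \<beta> j) \<in> neg_roots A \<longrightarrow> \<gamma> \<noteq> \<beta>
        \<longrightarrow> pair A (coroot A \<beta>) \<gamma> = 1)"
proof (cases "\<beta> \<in> pos_roots A")
  case True
  then have "\<beta> \<in> roots A" by (simp add: pos_roots_iff)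
  then obtain ws i where w: "\<beta> = wact A ws (simple i)" unfolding roots_iff by blast
  show ?thesis using True srefl_eq[OF g w] by (auto simp: quantum_roots_def Inv_def)
next
  case False then show ?thesis by (simp add: quantum_roots_def)
qed


lemma ht_crefl: "ht (crefl A i y) = ht y - pair A y (simple i)"
proof -
  have "ht (crefl A i y) = (\<Sum>j\<in>UNIV. y j - pair A y (simple i) * simple j i)"
    by (simp add: ht_def crefl_def fun_diff_def)
  also have "\<dots> = ht y - pair A y (simple i) * (\<Sum>j\<in>UNIV. simple j i)"
    by (simp add: ht_def sum_subtractf sum_distrib_left)
  also have "(\<Sum>j\<in>UNIV. simple j i) = (1::int)"
    by (simp add: simple_def)
  finally show ?thesis by simp
qed

lemma pair_expand: "pair A y x = (\<Sum>j\<in>UNIV. x j * pair A y (simple j))"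
  unfolding pair_simple_right by (rule pair_alt2)

lemma pair_neg_right: "pair A y (\<lambda>j. - x j) = - pair A y x"
  using pair_lin_right[of A y "-1" x 0 x] by simp

lemma part2:
  assumes g: "gcm A" and bq: "\<beta> \<in> quantum_roots A"
  shows "refl A i \<beta> \<in> quantum_roots A \<longleftrightarrow> \<bar>pair A (coroot A \<beta>) (simple i)\<bar> \<le> 1"
proof -
  have bp: "\<beta> \<in> pos_roots A" using bq quantum_char[OF g] by blast
  have br: "\<beta> \<in> roots A" using bp by (simp add: pos_roots_iff)
  define c where "c = coroot A \<beta>"
  define k where "k = pair A c (simple i)"
  have Qb: "pair A c \<gamma> = 1" if "\<gamma> \<in> pos_roots A" "(\<lambda>j. \<gamma> j - pair A c \<gamma> * \<beta> j) \<in> neg_roots A" "\<gamma> \<noteq> \<beta>" for \<gamma>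
    using bq quantum_char[OF g] that c_def by blast
  have d: "A i i = 2" using gcm_diag[OF g] by blast
  have ri: "refl A i (simple i) = (\<lambda>j. - simple i j)" by (rule refl_simple_self[of A i, OF d])
  have notpos: "(\<lambda>j. - simple i j) \<notin> pos_roots A" by (auto simp: pos_roots_iff simple_def)
  show ?thesis
  proof (cases "\<beta> = simple i")
    case True
    have "c = simple i" using coroot_simple[OF g] True c_def by simp
    then have "k = 2" using d by (simp add: k_def pair_simple_simple)
    moreover have "refl A i \<beta> \<notin> quantum_roots A" using True ri notpos quantum_char[OF g] by auto
    ultimately show ?thesis by (simp add: k_def c_def)
  next
    case ne: False
    define \<gamma> where "\<gamma> = refl A i \<beta>"
    have gp: "\<gamma> \<in> pos_roots A" using refl_pos[OF g bp ne] \<gamma>_def by simp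
    have gr: "\<gamma> \<in> roots A" using gp by (simp add: pos_roots_iff)
    define c' where "c' = coroot A \<gamma>"
    have c'c: "c' = crefl A i c" using coroot_refl[OF g br] c'_def c_def \<gamma>_def by simp
    have pc': "pair A c' x = pair A c (refl A i x)" for x using pair_crefl[OF g] c'c by simp
    have rr: "refl A i \<gamma> = \<beta>" using refl_refl[of A i, OF d] \<gamma>_def by simp
    have gne: "\<gamma> \<noteq> simple i"
    proof
      assume "\<gamma> = simple i"
      then have "\<beta> = (\<lambda>j. - simple i j)" using rr ri by simp
      then show False using bp notpos by simp
    qed
    have pc'i: "pair A c' (simple i) = - k" using pc' ri k_def pair_neg_right by simp
    have Qg_iff: "\<gamma> \<in> quantum_roots A \<longleftrightarrow> (\<forall>\<delta>. \<delta> \<in> pos_roots A \<longrightarrow> (\<lambda>j. \<delta> j - pair A c' \<delta> * \<gamma> j) \<in> neg_roots A \<longrightarrow> \<delta> \<noteq> \<gamma> \<longrightarrow> pair A c' \<delta> = 1)"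
      using quantum_char[OF g, of \<gamma>] gp c'_def by simp
    have "\<gamma> \<in> quantum_roots A \<longleftrightarrow> \<bar>k\<bar> \<le> 1"
    proof
      assume gq: "\<gamma> \<in> quantum_roots A"
      show "\<bar>k\<bar> \<le> 1"
      proof (rule ccontr)
        assume "\<not> \<bar>k\<bar> \<le> 1"
        then consider "2 \<le> k" | "k \<le> -2" by linarith
        then show False
        proof cases
          case 1
          have "(\<lambda>j. simple i j - k * \<beta> j) \<in> neg_roots A"
            using S_neg[OF g bp ne] 1 k_def c_def by simp
          then have "k = 1" using Qb[OF simple_pos] ne k_def by metis
          then show False using 1 by simp
        next
          case 2
          have "(\<lambda>j. simple i j - pair A c' (simple i) * \<gamma> j) \<in> neg_roots A"
            using S_neg[OF g gp gne] 2 pc'i c'_def by simp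
          then have "pair A c' (simple i) = 1" using gq Qg_iff simple_pos gne by metis
          then show False using 2 pc'i by simp
        qed
      qed
    next
      assume kk: "\<bar>k\<bar> \<le> 1"
      show "\<gamma> \<in> quantum_roots A" unfolding Qg_iff
      proof (intro allI impI)
        fix \<delta> assume dp: "\<delta> \<in> pos_roots A" and dn: "(\<lambda>j. \<delta> j - pair A c' \<delta> * \<gamma> j) \<in> neg_roots A"
          and dg: "\<delta> \<noteq> \<gamma>"
        show "pair A c' \<delta> = 1"
        proof (cases "\<delta> = simple i")
          case True
          have "k < 0"
          proof (rule ccontr)
            assume "\<not> k < 0"
            then have "0 \<le> k * \<gamma> i" using gp by (simp add: pos_roots_iff)
            moreover have "(\<lambda>j. \<delta> j - pair A c' \<delta> * \<gamma> j) i \<le> 0" using dn by (simp add: neg_roots_iff[OF g])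
            ultimately show False using True pc'i by (simp add: simple_def)
          qed
          then have "k = -1" using kk by simp
          then show ?thesis using True pc'i by simp
        next
          case dne: False
          define \<epsilon> where "\<epsilon> = refl A i \<delta>"
          have ep: "\<epsilon> \<in> pos_roots A" using refl_pos[OF g dp dne] \<epsilon>_def by simp
          have er: "\<epsilon> \<in> roots A" using ep by (simp add: pos_roots_iff)
          have rre: "refl A i \<epsilon> = \<delta>" using refl_refl[of A i, OF d] \<epsilon>_def by simp
          define t where "t = pair A c \<epsilon>"
          have pt: "pair A c' \<delta> = t" using pc' t_def \<epsilon>_def by simp
          have eb: "\<epsilon> \<noteq> \<beta>" using rre rr dg \<gamma>_def by auto
          show ?thesis
          proof (cases "(\<lambda>j. \<epsilon> j - t * \<beta> j) \<in> neg_roots A")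
            case True
            then show ?thesis using Qb[OF ep _ eb] pt t_def by simp
          next
            case False
            define z where "z = (\<lambda>j. \<epsilon> j - t * \<beta> j)"
            have zr: "z \<in> roots A" using S_root[OF g br er] z_def t_def c_def by simp
            have zp: "z \<in> pos_roots A" using root_cases[OF g zr] False z_def by simp
            have "refl A i z = (\<lambda>j. 1 * refl A i \<epsilon> j + (- t) * refl A i \<beta> j)"
              using refl_lin[of A i 1 \<epsilon> "-t" \<beta>] z_def by simp
            then have rz: "refl A i z = (\<lambda>j. \<delta> j - pair A c' \<delta> * \<gamma> j)"
              using rre pt \<gamma>_def by simp
            have zi: "z = simple i"
            proof (rule ccontr)
              assume "z \<noteq> simple i"
              then have "refl A i z \<in> pos_roots A" by (rule refl_pos[OF g zp])
              then show False using pos_not_neg[OF g] dn rz by simp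
            qed
            have "pair A c z = t - t * 2"
              using pair_diff_right[of A c \<epsilon> t \<beta>] pair_coroot_self[OF g br] z_def t_def c_def by simp
            then have tk: "t = - k" using zi k_def by simp
            have ee: "\<epsilon> j = simple i j + t * \<beta> j" for j using zi z_def by (metis diff_add_cancel add.commute)
            consider "k = 0" | "k = 1" | "k = -1" using kk by linarith
            then show ?thesis
            proof cases
              case 1
              then have "\<epsilon> = simple i" using ee tk by auto
              then have "\<delta> = (\<lambda>j. - simple i j)" using rre ri by simp
              then show ?thesis using dp notpos by simp
            next
              case 2
              obtain j where j: "j \<noteq> i" "0 < \<beta> j" using pos_other[OF g bp ne] by blast
              have "\<epsilon> j < 0" using ee[of j] tk 2 j by (simp add: simple_def)
              then show ?thesis using ep by (simp add: pos_roots_iff) (metis not_le)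
            next
              case 3
              then show ?thesis using tk pt by simp
            qed
          qed
        qed
      qed
    qed
    then show ?thesis using \<gamma>_def k_def c_def by simp
  qed
qed

lemma part1:
  assumes g: "gcm A" and bq: "\<beta> \<in> quantum_roots A" and ns: "\<forall>i. \<beta> \<noteq> simple i"
  shows "\<exists>i. refl A i \<beta> \<in> quantum_roots A \<and> ht (crefl A i (coroot A \<beta>)) = ht (coroot A \<beta>) - 1"
proof -
  have bp: "\<beta> \<in> pos_roots A" using bq quantum_char[OF g] by blast
  have br: "\<beta> \<in> roots A" using bp by (simp add: pos_roots_iff)
  define c where "c = coroot A \<beta>"
  have "\<exists>k. 1 \<le> pair A c (simple k)"
  proof (rule ccontr)
    assume "\<not> (\<exists>k. 1 \<le> pair A c (simple k))"
    then have "\<forall>k. pair A c (simple k) \<le> 0" by (meson not_le zero_less_iff_neq_zero int_one_le_iff_zero_less)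
    then have "(\<Sum>j\<in>UNIV. \<beta> j * pair A c (simple j)) \<le> 0"
      using bp by (intro sum_nonpos) (auto simp: pos_roots_iff mult_nonneg_nonpos)
    moreover have "pair A c \<beta> = 2" using pair_coroot_self[OF g br] c_def by simp
    ultimately show False using pair_expand[of A c \<beta>] by simp
  qed
  then obtain k where k: "1 \<le> pair A c (simple k)" by blast
  have ne: "\<beta> \<noteq> simple k" using ns by simp
  have "(\<lambda>j. simple k j - pair A c (simple k) * \<beta> j) \<in> neg_roots A"
    using S_neg[OF g bp ne] k c_def by simp
  then have k1: "pair A c (simple k) = 1"
    using bq quantum_char[OF g] simple_pos ne c_def by metis
  have "refl A k \<beta> \<in> quantum_roots A" using part2[OF g bq, of k] k1 c_def by simp
  moreover have "ht (crefl A k c) = ht c - 1" using ht_crefl[of A k c] k1 by simp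
  ultimately show ?thesis using c_def by blast
qed

theorem proposition2p5:
  fixes A :: "'i::finite \<Rightarrow> 'i \<Rightarrow> int"
  assumes "gcm A"
  shows "(\<forall>\<beta> \<in> quantum_roots A. (\<forall>i. \<beta> \<noteq> simple i) \<longrightarrow>
            (\<exists>i. refl A i \<beta> \<in> quantum_roots A \<and>
                 ht (crefl A i (coroot A \<beta>)) = ht (coroot A \<beta>) - 1))
       \<and> (\<forall>\<beta> \<in> quantum_roots A. \<forall>i.
            refl A i \<beta> \<in> quantum_roots A \<longleftrightarrow> \<bar>pair A (coroot A \<beta>) (simple i)\<bar> \<le> 1)"
  using part1[OF assms] part2[OF assms] by blast

end
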